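(* Let $G \cong \mathbb{R}^{d_1}\times\mathbb{R}^{d_2}$ be a 2-step stratified group with sub-Laplacian $\mathcal{L}$, and let $\mathcal{H}(\mathbf{x},\boldsymbol{\xi}) \mathrel{:=} |\xi + J_\mu x/2|$ for $\mathbf{x}=(x,u)$, $\boldsymbol{\xi}=(\xi,\mu)\in\mathbb{R}^{d_1}\times\mathbb{R}^{d_2}$. Let $\boldsymbol{\xi}_0=(\xi_0,\mu_0)\in\mathbb{R}^d$. (i) The solution $(\mathbf{x}(t),\boldsymbol{\xi}(t))$ of $\dot{\mathbf{x}} = \nabla_{\boldsymbol{\xi}}\mathcal{A}$, $\dot{\boldsymbol{\xi}} = -\nabla_{\mathbf{x}}\mathcal{A}$, $\mathbf{x}(0)=0$, $\boldsymbol{\xi}(0)=\boldsymbol{\xi}_0$, with $\mathcal{A} \mathrel{:=} \mathcal{H}^2/2$, is \[ x(t) = \frac{\exp(tJ_{\mu_0})-I}{J_{\mu_0}}\xi_0,\quad \xi(t)=\tfrac12(I+\exp(tJ_{\mu_0}))\xi_0,\quad u(t)=\tfrac12\int_0^t\Big[\frac{\exp(\tau J_{\mu_0})-I}{J_{\mu_0}}\xi_0,\exp(\tau J_{\mu_0})\xi_0\Big]d\tau,\quad \mu(t)=\mu_0. \] (ii) If $\xi_0\neq 0$, the solution of $\dot{\mathbf{x}} = \nabla_{\boldsymbol{\xi}}\mathcal{H}$, $\dot{\boldsymbol{\xi}} = -\nabla_{\mathbf{x}}\mathcal{H}$, $\mathbf{x}(0)=0$, $\boldsymbol{\xi}(0)=\boldsymbol{\xi}_0$,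 is \[ x(t) = \frac{\exp(tJ_{\mu_0/|\xi_0|})-I}{J_{\mu_0}}\xi_0,\quad \xi(t)=\tfrac12(I+\exp(tJ_{\mu_0/|\xi_0|}))\xi_0, \] \[ u(t)=\tfrac12\int_0^t\Big[\frac{\exp(\tau J_{\mu_0/|\xi_0|})-I}{J_{\mu_0}}\xi_0,\exp(\tau J_{\mu_0/|\xi_0|})\frac{\xi_0}{|\xi_0|}\Big]d\tau,\quad \mu(t)=\mu_0. \]
   Context: $G$ is a 2-step stratified Lie group identified with $\mathbb{R}^{d_1}_x\times\mathbb{R}^{d_2}_u$ via exponential coordinates, with coordinates on $\mathfrak{g}_1$ orthonormal for the inner product $\langle\cdot,\cdot\rangle$ making the vector fields $X_j$ of $\mathcal{L}=-\sum X_j^2$ orthonormal; $[\cdot,\cdot]:\mathbb{R}^{d_1}\times\mathbb{R}^{d_1}\to\mathbb{R}^{d_2}$ is the Lie bracket in these coordinates. For $\mu\in\mathbb{R}^{d_2}$, $J_\mu$ is the skew-symmetric $d_1\times d_1$ matrix with $\langle J_\mu x,x'\rangle=\mu\cdot[x,x']$. Expressions of the form $\frac{\exp(sJ)-I}{J}$ denote $f(J)$ for the entire function $f(z)=(e^{sz}-1)/z$, i.e. $\sum_{n\geq1}s^nJ^{n-1}/n!$ (so no invertibility of $J$ is needed). *)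

theory Defs
  imports "HOL-Analysis.Analysis"
begin

text \<open>Matrix powers (matrix product).\<close>
primrec mpow :: "real^'n^'n \<Rightarrow> nat \<Rightarrow> real^'n^'n" where
  "mpow A 0 = mat 1"
| "mpow A (Suc k) = A ** mpow A k"

text \<open>Matrix exponential exp(sA) as its power series.\<close>
definition mexp :: "real \<Rightarrow> real^'n^'n \<Rightarrow> real^'n^'n" where
  "mexp s A = (\<Sum>k. (s ^ k / fact k) *\<^sub>R mpow A k)"

text \<open>(exp(sA) - I)/A, i.e. f(A) for the entire function f(z) = (e^{sz}-1)/z,
  given by the series sum over n >= 1 of s^n A^(n-1)/n!.\<close>
definition mphi :: "real \<Rightarrow> real^'n^'n \<Rightarrow> real^'n^'n" where
  "mphi s A = (\<Sum>k. (s ^ Suc k / fact (Suc k)) *\<^sub>R mpow A k)"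

text \<open>J_mu: the matrix with <J_mu x, x'> = mu . [x, x'] (entries J_ij = mu . [e_j, e_i]).\<close>
definition Jmat :: "(real^'n \<Rightarrow> real^'n \<Rightarrow> real^'m) \<Rightarrow> real^'m \<Rightarrow> real^'n^'n" where
  "Jmat br \<mu> = (\<chi> i j. \<mu> \<bullet> br (axis j 1) (axis i 1))"

text \<open>H(x, xi) = |xi + J_mu x / 2| for x = (x,u), xi = (xi,mu).\<close>
definition Hsub :: "(real^'n \<Rightarrow> real^'n \<Rightarrow> real^'m) \<Rightarrow> ((real^'n) \<times> (real^'m)) \<Rightarrow> ((real^'n) \<times> (real^'m)) \<Rightarrow> real" where
  "Hsub br X \<Xi> = norm (fst \<Xi> + (1/2) *\<^sub>R (Jmat br (snd \<Xi>) *v fst X))"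

text \<open>g is the gradient of f at x.\<close>
definition has_gradient :: "('a::real_inner \<Rightarrow> real) \<Rightarrow> 'a \<Rightarrow> 'a \<Rightarrow> bool" where
  "has_gradient f g x \<longleftrightarrow> (f has_derivative (\<lambda>h. g \<bullet> h)) (at x)"

text \<open>(X, Xi) solves dX/dt = grad_xi Ham, dXi/dt = - grad_x Ham for all real t,
  with X(0) = X0, Xi(0) = Xi0.\<close>
definition hamiltonian_solution ::
  "('p::real_inner \<Rightarrow> 'p \<Rightarrow> real) \<Rightarrow> (real \<Rightarrow> 'p) \<Rightarrow> (real \<Rightarrow> 'p) \<Rightarrow> 'p \<Rightarrow> 'p \<Rightarrow> bool" where
  "hamiltonian_solution Ham X \<Xi> X0 \<Xi>0 \<longleftrightarrow>
     X 0 = X0 \<and> \<Xi> 0 = \<Xi>0 \<and>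
     (\<forall>t. \<exists>X' \<Xi>'. (X has_vector_derivative X') (at t) \<and> (\<Xi> has_vector_derivative \<Xi>') (at t) \<and>
        has_gradient (\<lambda>\<eta>. Ham (X t) \<eta>) X' (\<Xi> t) \<and>
        has_gradient (\<lambda>y. Ham y (\<Xi> t)) (- \<Xi>') (X t))"

text \<open>Oriented integral from 0 to t.\<close>
definition oint :: "real \<Rightarrow> (real \<Rightarrow> 'a::euclidean_space) \<Rightarrow> 'a" where
  "oint t f = (if 0 \<le> t then integral {0..t} f else - integral {t..0} f)"

end

theory Submission
  imports Defs
begin

lemma ser_norm_summable:
  fixes M :: "nat \<Rightarrow> 'a::real_normed_vector"
  assumes M: "\<And>k. norm (M k) \<le> K * C ^ k" and C: "C \<ge> 0"
  shows "summable (\<lambda>k. norm ((s ^ k / fact k) *\<^sub>R M k))"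
proof (rule summable_comparison_test')
  show "summable (\<lambda>k. K * (inverse (fact k) * (\<bar>s\<bar> * C) ^ k))"
    by (intro summable_mult summable_exp)
  fix k :: nat assume "k \<ge> 0"
  have "norm ((s ^ k / fact k) *\<^sub>R M k) = (\<bar>s\<bar> ^ k / fact k) * norm (M k)"
    by (simp add: power_abs)
  also have "\<dots> \<le> (\<bar>s\<bar> ^ k / fact k) * (K * C ^ k)"
    by (intro mult_left_mono M) auto
  also have "\<dots> = K * (inverse (fact k) * (\<bar>s\<bar> * C) ^ k)"
    by (simp add: power_mult_distrib field_simps)
  finally show "norm (norm ((s ^ k / fact k) *\<^sub>R M k)) \<le> K * (inverse (fact k) * (\<bar>s\<bar> * C) ^ k)"
    by simp
qed

lemma ser_summable:
  fixes M :: "nat \<Rightarrow> 'a::banach"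
  assumes M: "\<And>k. norm (M k) \<le> K * C ^ k" and C: "C \<ge> 0"
  shows "summable (\<lambda>k. (s ^ k / fact k) *\<^sub>R M k)"
  by (rule summable_norm_cancel[OF ser_norm_summable[OF M C]])

lemma ser_deriv:
  fixes M :: "nat \<Rightarrow> 'a::euclidean_space"
  assumes M: "\<And>k. norm (M k) \<le> K * C ^ k" and C: "C \<ge> 0"
  shows "((\<lambda>s. \<Sum>k. (s ^ k / fact k) *\<^sub>R M k) has_vector_derivative
           (\<Sum>k. (t ^ k / fact k) *\<^sub>R M (Suc k))) (at t)"
proof -
  have M': "\<And>k. norm (M (Suc k)) \<le> (K * C) * C ^ k" using M by (metis power_Suc mult.assoc mult.commute)
  have inner_sum: "(\<Sum>k. (s ^ k / fact k) *\<^sub>R N k) \<bullet> b = (\<Sum>k. (N k \<bullet> b / fact k) * s ^ k)"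
    if N: "\<And>k. norm (N k) \<le> L * C ^ k" for N :: "nat \<Rightarrow> 'a" and L s b
  proof -
    have "(\<Sum>k. (s ^ k / fact k) *\<^sub>R N k) \<bullet> b = (\<Sum>k. ((s ^ k / fact k) *\<^sub>R N k) \<bullet> b)"
      using bounded_linear.suminf[OF bounded_linear_inner_left ser_summable[OF N C]] by simp
    then show ?thesis by (simp add: mult.commute)
  qed
  have csum: "summable (\<lambda>k. (M k \<bullet> b / fact k) * y ^ k)" if "b \<in> Basis" for b y
  proof (rule summable_comparison_test'[OF ser_norm_summable[OF M C, of y]])
    fix k :: nat assume "k \<ge> 0"
    have "\<bar>M k \<bullet> b\<bar> \<le> norm (M k)" using that by (metis Basis_le_norm)
    then show "norm ((M k \<bullet> b / fact k) * y ^ k) \<le> norm ((y ^ k / fact k) *\<^sub>R M k)"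
      by (auto simp: abs_mult power_abs divide_simps mult.commute[of _ "\<bar>y\<bar> ^ k"] intro!: mult_left_mono)
  qed
  show ?thesis
    unfolding has_vector_derivative_def
  proof (subst has_derivative_componentwise_within, intro ballI)
    fix b :: 'a assume b: "b \<in> Basis"
    have "((\<lambda>s. \<Sum>k. (M k \<bullet> b / fact k) * s ^ k) has_field_derivative
             (\<Sum>k. diffs (\<lambda>k. M k \<bullet> b / fact k) k * t ^ k)) (at t)"
      by (rule termdiffs_strong_converges_everywhere[OF csum[OF b]])
    moreover have "(\<Sum>k. diffs (\<lambda>k. M k \<bullet> b / fact k) k * t ^ k) =
        (\<Sum>k. (t ^ k / fact k) *\<^sub>R M (Suc k)) \<bullet> b"
      unfolding inner_sum[OF M'] diffs_def
      by (intro suminf_cong) (simp add: field_simps fact_Suc del: of_nat_Suc)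
    ultimately show "((\<lambda>s. (\<Sum>k. (s ^ k / fact k) *\<^sub>R M k) \<bullet> b) has_derivative
        (\<lambda>h. (h *\<^sub>R (\<Sum>k. (t ^ k / fact k) *\<^sub>R M (Suc k))) \<bullet> b)) (at t)"
      unfolding inner_sum[OF M] by (simp add: has_field_derivative_def mult.commute[of _ "(\<Sum>k. (t ^ k / fact k) *\<^sub>R M (Suc k)) \<bullet> b"])
  qed
qed


abbreviation "opn (M::real^'n^'n) \<equiv> onorm ((*v) M)"

lemma opn_mult: "opn (A ** B) \<le> opn A * opn (B::real^'n^'n)"
proof -
  have "(*v) (A ** B) = (*v) A \<circ> (*v) B" by (auto simp: matrix_vector_mul_assoc)
  then show ?thesis using onorm_compose[of "(*v) A" "(*v) B"] by simp
qed

lemma opn_mpow: "opn (mpow A k) \<le> opn (A::real^'n^'n) ^ k"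
proof (induction k)
  case 0
  have "(*v) (mat 1 :: real^'n^'n) = (\<lambda>x. x)" by auto
  then show ?case using onorm_id_le by simp
next
  case (Suc k)
  have "opn (mpow A (Suc k)) \<le> opn A * opn (mpow A k)" using opn_mult by simp
  also have "\<dots> \<le> opn A * opn A ^ k"
    by (intro mult_left_mono Suc onorm_pos_le) auto
  finally show ?case by simp
qed

lemma norm_le_opn: "norm (M::real^'n^'n) \<le> real CARD('n) * real CARD('n) * opn M"
proof -
  have "norm M \<le> (\<Sum>i\<in>UNIV. norm (M $ i))"
    unfolding norm_vec_def by (rule L2_set_le_sum) auto
  also have "\<dots> \<le> (\<Sum>i\<in>(UNIV::'n set). real CARD('n) * opn M)"
  proof (rule sum_mono)
    fix i
    have "norm (M $ i) \<le> (\<Sum>j\<in>UNIV. \<bar>M $ i $ j\<bar>)" by (rule norm_le_l1_cart)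
    also have "\<dots> \<le> (\<Sum>j\<in>(UNIV::'n set). opn M)"
      by (intro sum_mono matrix_component_le_onorm)
    finally show "norm (M $ i) \<le> real CARD('n) * opn M" by simp
  qed
  finally show ?thesis by simp
qed

lemma mpow_bound: "norm (mpow A k) \<le> (real CARD('n) * real CARD('n)) * opn (A::real^'n^'n) ^ k"
  by (rule order_trans[OF norm_le_opn]) (intro mult_left_mono opn_mpow, simp)

lemma opn_nonneg: "opn (A::real^'n^'n) \<ge> 0" by (intro onorm_pos_le) auto

lemma mpow_bound_Suc: "norm (mpow A (Suc k)) \<le> ((real CARD('n) * real CARD('n)) * opn (A::real^'n^'n)) * opn A ^ k"
  using mpow_bound[of A "Suc k"] by (simp add: mult_ac)

lemma mexp_summable: "summable (\<lambda>k. (s ^ k / fact k) *\<^sub>R mpow (A::real^'n^'n) k)"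
  by (rule ser_summable[OF mpow_bound opn_nonneg])

lemma bl_mmul: "bounded_linear (\<lambda>X. (A::real^'n^'n) ** X)"
  unfolding linear_conv_bounded_linear[symmetric]
  by (rule linearI) (auto simp: matrix_add_ldistrib matrix_scalar_ac scalar_matrix_assoc)

lemma mexp_deriv: "((\<lambda>s. mexp s A) has_vector_derivative A ** mexp t (A::real^'n^'n)) (at t)"
proof -
  have "A ** mexp t A = (\<Sum>k. A ** ((t ^ k / fact k) *\<^sub>R mpow A k))"
    unfolding mexp_def
    using bounded_linear.suminf[OF bl_mmul[of A] mexp_summable[of t A]] by simp
  also have "\<dots> = (\<Sum>k. (t ^ k / fact k) *\<^sub>R mpow A (Suc k))"
    by (simp add: matrix_scalar_ac scalar_matrix_assoc)
  finally show ?thesis unfolding mexp_def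
    using ser_deriv[OF mpow_bound opn_nonneg] by simp
qed


definition "Nphi (A::real^'n^'n) k = (case k of 0 \<Rightarrow> 0 | Suc j \<Rightarrow> mpow A j)"

lemma Nphi_bound: "norm (Nphi A k) \<le> (real CARD('n) * real CARD('n)) * (opn (A::real^'n^'n) + 1) ^ k"
proof (cases k)
  case 0 then show ?thesis by (simp add: Nphi_def)
next
  case (Suc j)
  have "norm (mpow A j) \<le> (real CARD('n) * real CARD('n)) * opn A ^ j" by (rule mpow_bound)
  also have "\<dots> \<le> (real CARD('n) * real CARD('n)) * (opn A + 1) ^ Suc j"
  proof (intro mult_left_mono)
    have "opn A ^ j \<le> (opn A + 1) ^ j" by (intro power_mono) (auto simp: opn_nonneg)
    also have "\<dots> \<le> (opn A + 1) ^ Suc j"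
      using opn_nonneg[of A] by (intro power_increasing) auto
    finally show "opn A ^ j \<le> (opn A + 1) ^ Suc j" .
  qed simp
  finally show ?thesis by (simp add: Suc Nphi_def)
qed

lemma Nphi_summable: "summable (\<lambda>k. (s ^ k / fact k) *\<^sub>R Nphi (A::real^'n^'n) k)"
  by (rule ser_summable[OF Nphi_bound]) (simp add: opn_nonneg add_nonneg_nonneg)

lemma mphi_eq: "mphi s A = (\<Sum>k. (s ^ k / fact k) *\<^sub>R Nphi (A::real^'n^'n) k)"
  unfolding mphi_def
  using suminf_split_head[OF Nphi_summable[of s A]] by (simp add: Nphi_def)

lemma mphi_summable: "summable (\<lambda>k. (s ^ Suc k / fact (Suc k)) *\<^sub>R mpow (A::real^'n^'n) k)"
  using Nphi_summable[of s A] summable_Suc_iff[of "\<lambda>k. (s ^ k / fact k) *\<^sub>R Nphi A k"]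
  by (simp add: Nphi_def)

lemma mphi_deriv: "((\<lambda>s. mphi s A) has_vector_derivative mexp t (A::real^'n^'n)) (at t)"
proof -
  have "((\<lambda>s. \<Sum>k. (s ^ k / fact k) *\<^sub>R Nphi A k) has_vector_derivative
           (\<Sum>k. (t ^ k / fact k) *\<^sub>R Nphi A (Suc k))) (at t)"
    by (rule ser_deriv[OF Nphi_bound]) (simp add: opn_nonneg add_nonneg_nonneg)
  then show ?thesis unfolding mphi_eq by (simp add: Nphi_def mexp_def)
qed

lemma mphi_mult: "A ** mphi s A = mexp s A - mat 1"
proof -
  have "A ** mphi s A = (\<Sum>k. A ** ((s ^ Suc k / fact (Suc k)) *\<^sub>R mpow A k))"
    unfolding mphi_def using bounded_linear.suminf[OF bl_mmul[of A] mphi_summable[of s A]] by simp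
  also have "\<dots> = (\<Sum>k. (s ^ Suc k / fact (Suc k)) *\<^sub>R mpow A (Suc k))"
    by (simp add: matrix_scalar_ac scalar_matrix_assoc)
  also have "\<dots> = mexp s A - mat 1"
    unfolding mexp_def using suminf_split_head[OF mexp_summable[of s A]] by simp
  finally show ?thesis .
qed

lemma mpow_scale: "mpow (r *\<^sub>R A) k = r ^ k *\<^sub>R mpow A k"
  by (induction k) (auto simp: matrix_scalar_ac scalar_matrix_assoc mult.commute)

lemma mexp_scale: "mexp s (r *\<^sub>R A) = mexp (s * r) A"
  unfolding mexp_def mpow_scale by (simp add: power_mult_distrib mult_ac)

lemma mphi_scale: "mphi (s * r) A = r *\<^sub>R mphi s (r *\<^sub>R (A::real^'n^'n))"
proof -
  have "r *\<^sub>R mphi s (r *\<^sub>R A) = (\<Sum>k. r *\<^sub>R ((s ^ Suc k / fact (Suc k)) *\<^sub>R mpow (r *\<^sub>R A) k))"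
    unfolding mphi_def using suminf_scaleR_right[OF mphi_summable[of s "r *\<^sub>R A"], of r] by simp
  also have "\<dots> = mphi (s * r) A"
    unfolding mphi_def mpow_scale by (simp add: power_mult_distrib mult_ac)
  finally show ?thesis by simp
qed

lemma mexp_0: "mexp 0 A = mat 1"
proof -
  have "(\<lambda>k. (0 ^ k / fact k) *\<^sub>R mpow A k) = (\<lambda>k. if k = 0 then mat 1 else 0)"
    by (auto simp: fun_eq_iff)
  then show ?thesis unfolding mexp_def
    using sums_unique[OF sums_single[of 0 "\<lambda>_. mat 1 :: real^'a^'a"]] by simp
qed

lemma mphi_0: "mphi 0 A = 0"
  unfolding mphi_def by simp

lemma mexp_cont: "continuous_on S (\<lambda>s. mexp s (A::real^'n^'n))"
  by (intro continuous_at_imp_continuous_on ballI has_vector_derivative_continuous[OF mexp_deriv])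

lemma mphi_cont: "continuous_on S (\<lambda>s. mphi s (A::real^'n^'n))"
  by (intro continuous_at_imp_continuous_on ballI has_vector_derivative_continuous[OF mphi_deriv])


lemma vec_expand: "x = (\<Sum>j\<in>UNIV. (x $ j) *\<^sub>R axis j (1::real))"
  using basis_expansion[of x] by (simp add: scalar_mult_eq_scaleR)

lemma J_inner:
  fixes br :: "real^'n \<Rightarrow> real^'n \<Rightarrow> real^'m"
  assumes bil: "bilinear br"
  shows "(Jmat br m *v x) \<bullet> y = m \<bullet> br x y"
proof -
  have "m \<bullet> br x y = m \<bullet> br (\<Sum>j\<in>UNIV. (x $ j) *\<^sub>R axis j 1) (\<Sum>i\<in>UNIV. (y $ i) *\<^sub>R axis i 1)"
    using vec_expand[of x] vec_expand[of y] by simp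
  also have "\<dots> = (\<Sum>(j,i)\<in>UNIV \<times> UNIV. x $ j * y $ i * (m \<bullet> br (axis j 1) (axis i 1)))"
    unfolding bilinear_sum[OF bil] inner_sum_right
    by (intro sum.cong) (auto simp: bilinear_lmul[OF bil] bilinear_rmul[OF bil])
  also have "\<dots> = (\<Sum>j\<in>UNIV. \<Sum>i\<in>UNIV. x $ j * y $ i * (m \<bullet> br (axis j 1) (axis i 1)))"
    by (simp add: sum.cartesian_product)
  also have "\<dots> = (\<Sum>i\<in>UNIV. \<Sum>j\<in>UNIV. x $ j * y $ i * (m \<bullet> br (axis j 1) (axis i 1)))"
    by (rule sum.swap)
  also have "\<dots> = (Jmat br m *v x) \<bullet> y"
    unfolding inner_vec_def[of "Jmat br m *v x"]
    by (simp add: matrix_vector_mult_def Jmat_def sum_distrib_right sum_distrib_left mult_ac)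
  finally show ?thesis by simp
qed

lemma J_skew:
  fixes br :: "real^'n \<Rightarrow> real^'n \<Rightarrow> real^'m"
  assumes bil: "bilinear br" and skew: "\<And>x y. br x y = - br y x"
  shows "(Jmat br m *v x) \<bullet> y = - ((Jmat br m *v y) \<bullet> x)"
  using skew[of x y] by (simp add: J_inner[OF bil])

lemma J_self:
  fixes br :: "real^'n \<Rightarrow> real^'n \<Rightarrow> real^'m"
  assumes bil: "bilinear br" and skew: "\<And>x y. br x y = - br y x"
  shows "(Jmat br m *v x) \<bullet> x = 0"
  using J_skew[OF bil skew, of m x x] by simp

lemma J_add: "Jmat br (a + b) = Jmat br a + Jmat br b"
  by (simp add: Jmat_def vec_eq_iff inner_add_left)

lemma J_scale: "Jmat br (r *\<^sub>R a) = r *\<^sub>R Jmat br a"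
  by (simp add: Jmat_def vec_eq_iff)

lemma J_zero: "Jmat br 0 = 0"
  by (simp add: Jmat_def vec_eq_iff)

lemma abs_not_deriv: "\<not> ((\<lambda>s::real. \<bar>s\<bar>) has_field_derivative D) (at 0)"
proof
  assume d: "((\<lambda>s::real. \<bar>s\<bar>) has_field_derivative D) (at 0)"
  have "D = 0"
    by (rule DERIV_local_min[OF d, of 1]) auto
  have "((\<lambda>s::real. \<bar>s\<bar> - s) has_field_derivative D - 1) (at 0)"
    using DERIV_diff[OF d DERIV_ident] by simp
  moreover have "D - 1 = 0"
    by (rule DERIV_local_min[OF calculation, of 1]) auto
  ultimately show False using \<open>D = 0\<close> by simp
qed


lemma grad_unique:
  assumes "has_gradient f a x" "has_gradient f b x"
  shows "a = b"
proof -
  have "(\<lambda>h. a \<bullet> h) = (\<lambda>h. b \<bullet> h)"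
    using assms unfolding has_gradient_def by (rule has_derivative_unique)
  then have "a \<bullet> (a - b) = b \<bullet> (a - b)" by metis
  then have "(a - b) \<bullet> (a - b) = 0" by (simp add: inner_diff_left)
  then show ?thesis by simp
qed

lemma grad_xi:
  fixes br :: "real^'n \<Rightarrow> real^'n \<Rightarrow> real^'m"
  assumes bil: "bilinear br"
    and g: "(g has_derivative (\<lambda>h. w \<bullet> h)) (at (\<xi> + (1/2) *\<^sub>R (Jmat br \<mu> *v x)))"
  shows "has_gradient (\<lambda>\<eta>. g (fst \<eta> + (1/2) *\<^sub>R (Jmat br (snd \<eta>) *v x))) (w, (1/2) *\<^sub>R br x w) (\<xi>, \<mu>)"
proof -
  define L where "L = (\<lambda>\<eta>::((real^'n) \<times> (real^'m)). fst \<eta> + (1/2) *\<^sub>R (Jmat br (snd \<eta>) *v x))"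
  have lin: "linear L"
    by (rule linearI)
       (auto simp: L_def J_add J_scale matrix_vector_mult_add_rdistrib scaleR_matrix_vector_assoc[symmetric] algebra_simps)
  then have bl: "bounded_linear L" by (simp add: linear_conv_bounded_linear)
  have dL: "(L has_derivative L) (at (\<xi>, \<mu>))"
    using bounded_linear.has_derivative[OF bl has_derivative_ident] by simp
  have "((\<lambda>\<eta>. g (L \<eta>)) has_derivative (\<lambda>h. w \<bullet> L h)) (at (\<xi>, \<mu>))"
    by (rule has_derivative_compose[OF dL]) (use g in \<open>simp add: L_def\<close>)
  moreover have "(\<lambda>h. w \<bullet> L h) = (\<lambda>h. (w, (1/2) *\<^sub>R br x w) \<bullet> h)"
    by (auto simp: L_def inner_prod_def inner_add_right J_inner[OF bil] inner_commute[of w] inner_commute[of "br x w"])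
  ultimately show ?thesis unfolding has_gradient_def L_def by simp
qed

lemma grad_x:
  fixes br :: "real^'n \<Rightarrow> real^'n \<Rightarrow> real^'m"
  assumes bil: "bilinear br" and skew: "\<And>x y. br x y = - br y x"
    and g: "(g has_derivative (\<lambda>h. w \<bullet> h)) (at (\<xi> + (1/2) *\<^sub>R (Jmat br \<mu> *v x)))"
  shows "has_gradient (\<lambda>y. g (\<xi> + (1/2) *\<^sub>R (Jmat br \<mu> *v fst y)))
           (- ((1/2) *\<^sub>R (Jmat br \<mu> *v w)), 0::real^'m) (x, u)"
proof -
  define L where "L = (\<lambda>y::((real^'n) \<times> (real^'m)). (1/2) *\<^sub>R (Jmat br \<mu> *v fst y))"
  have lin: "linear L"
    by (rule linearI)
       (auto simp: L_def matrix_vector_right_distrib matrix_vector_mult_scaleR algebra_simps)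
  then have bl: "bounded_linear L" by (simp add: linear_conv_bounded_linear)
  have dL: "((\<lambda>y. \<xi> + L y) has_derivative L) (at (x, u))"
    using has_derivative_add[OF has_derivative_const bounded_linear.has_derivative[OF bl has_derivative_ident]]
    by simp
  have "((\<lambda>y. g (\<xi> + L y)) has_derivative (\<lambda>h. w \<bullet> L h)) (at (x, u))"
    by (rule has_derivative_compose[OF dL]) (use g in \<open>simp add: L_def\<close>)
  moreover have "(\<lambda>h. w \<bullet> L h) = (\<lambda>h. (- ((1/2) *\<^sub>R (Jmat br \<mu> *v w)), 0::real^'m) \<bullet> h)"
    by (auto simp: L_def inner_prod_def inner_commute[of w] J_skew[OF bil skew, of \<mu> _ w])
  ultimately show ?thesis unfolding has_gradient_def L_def by simp
qed

lemma deriv_sq2: "((\<lambda>z. (norm z)\<^sup>2 / 2) has_derivative (\<lambda>h. z \<bullet> h)) (at z)"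
proof -
  have "((\<lambda>z. (norm z)\<^sup>2 / 2) has_derivative (\<lambda>h. (2 *\<^sub>R (z \<bullet> h)) / 2)) (at z)"
    by (intro derivative_eq_intros has_derivative_sqnorm_at) auto
  then show ?thesis by simp
qed

lemma deriv_norm: "z \<noteq> 0 \<Longrightarrow> (norm has_derivative (\<lambda>h. (z /\<^sub>R norm z) \<bullet> h)) (at z)"
  using has_derivative_norm[of z] by (simp add: sgn_div_norm inner_commute)


lemma oint_deriv:
  fixes f :: "real \<Rightarrow> 'a::euclidean_space"
  assumes cf: "continuous_on UNIV f"
  shows "((\<lambda>s. oint s f) has_vector_derivative f t) (at t)"
proof -
  define a where "a = - \<bar>t\<bar> - 1"
  define b where "b = \<bar>t\<bar> + 1"
  have ab: "a < t" "t < b" by (auto simp: a_def b_def)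
  have int: "f integrable_on {p..q}" for p q
    by (rule integrable_continuous_real) (use cf in \<open>auto intro: continuous_on_subset\<close>)
  have "((\<lambda>s. integral {a..s} f) has_vector_derivative f t) (at t within {a..b})"
    by (rule integral_has_vector_derivative) (use cf ab in \<open>auto intro: continuous_on_subset\<close>)
  then have "((\<lambda>s. integral {a..s} f) has_vector_derivative f t) (at t)"
    using at_within_Icc_at[OF ab] by simp
  then have d: "((\<lambda>s. integral {a..s} f - integral {a..0} f) has_vector_derivative f t) (at t)"
    using has_vector_derivative_diff[OF _ has_vector_derivative_const] by fastforce
  show ?thesis
  proof (rule has_vector_derivative_transform_within_open[OF d, of "{a<..}"])
    fix s assume s: "s \<in> {a<..}"
    have a0: "a \<le> 0" by (simp add: a_def)
    show "integral {a..s} f - integral {a..0} f = oint s f"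
    proof (cases "0 \<le> s")
      case True
      then show ?thesis
        using Henstock_Kurzweil_Integration.integral_combine[OF a0 True int[of a s]] by (simp add: oint_def algebra_simps)
    next
      case False
      then have "a \<le> s" "s \<le> 0" using s by auto
      then show ?thesis
        using Henstock_Kurzweil_Integration.integral_combine[of a s 0 f] int[of a 0] False by (simp add: oint_def algebra_simps)
    qed
  qed (use ab in auto)
qed

lemma oint_0: "oint 0 f = 0"
  by (simp add: oint_def)

lemma vmul_deriv:
  fixes F :: "real \<Rightarrow> real^'n^'n"
  assumes "(F has_vector_derivative D) (at t)"
  shows "((\<lambda>s. F s *v v) has_vector_derivative D *v v) (at t)"
proof -
  have lin: "linear (\<lambda>M::real^'n^'n. M *v v)"
    by (rule linearI) (auto simp: matrix_vector_mult_add_rdistrib scaleR_matrix_vector_assoc)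
  then have bl: "bounded_linear (\<lambda>M::real^'n^'n. M *v v)" by (simp add: linear_conv_bounded_linear)
  show ?thesis
    using bounded_linear.has_derivative[OF bl assms[unfolded has_vector_derivative_def]]
    unfolding has_vector_derivative_def by (simp add: scaleR_matrix_vector_assoc)
qed

lemma deriv_zero_const:
  fixes f :: "real \<Rightarrow> 'a::real_normed_vector"
  assumes "\<And>t. (f has_vector_derivative 0) (at t)"
  shows "f t = f 0"
proof -
  obtain k where "\<And>x. x \<in> UNIV \<Longrightarrow> f x = k"
    by (rule has_vector_derivative_zero_constant[of UNIV f]) (use assms in auto)
  then show ?thesis by simp
qed

lemma skew_ode_zero:
  fixes d :: "real \<Rightarrow> real^'n"
  assumes dd: "\<And>t. (d has_vector_derivative (B *v d t)) (at t)"
    and sk: "\<And>z. (B *v z) \<bullet> z = 0" and d0: "d 0 = 0"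
  shows "d t = 0"
proof -
  have "((\<lambda>t. d t \<bullet> d t) has_vector_derivative 0) (at s)" for s
  proof -
    have "((\<lambda>t. d t \<bullet> d t) has_derivative (\<lambda>h. d s \<bullet> (h *\<^sub>R (B *v d s)) + (h *\<^sub>R (B *v d s)) \<bullet> d s)) (at s)"
      using dd[of s] unfolding has_vector_derivative_def
      by (intro derivative_eq_intros) auto
    moreover have "(\<lambda>h. d s \<bullet> (h *\<^sub>R (B *v d s)) + (h *\<^sub>R (B *v d s)) \<bullet> d s) = (\<lambda>h. h *\<^sub>R 0)"
      using sk[of "d s"] by (auto simp: inner_commute[of "d s"])
    ultimately show ?thesis unfolding has_vector_derivative_def by simp
  qed
  from deriv_zero_const[OF this] have "d t \<bullet> d t = d 0 \<bullet> d 0" .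
  then show ?thesis using d0 by simp
qed


lemma vd_scale: "(f has_vector_derivative D) (at t) \<Longrightarrow> ((\<lambda>x. r *\<^sub>R f x) has_vector_derivative r *\<^sub>R D) (at t)"
  using has_vector_derivative_scaleR[OF DERIV_const, of f D t UNIV r] by simp

locale core =
  fixes br :: "real^'n \<Rightarrow> real^'n \<Rightarrow> real^'m" and \<mu>0 :: "real^'m" and \<xi>0 :: "real^'n" and c :: real
  assumes bil: "bilinear br" and skew: "\<And>x y. br x y = - br y x" and cpos: "c > 0"
begin

definition "J0 = Jmat br \<mu>0"
definition "B = (1/c) *\<^sub>R J0"
definition "vc t = mexp t B *v \<xi>0"
definition "xc t = (1/c) *\<^sub>R (mphi t B *v \<xi>0)"
definition "uc t = (1/2) *\<^sub>R oint t (\<lambda>\<tau>. br (xc \<tau>) ((1/c) *\<^sub>R vc \<tau>))"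
definition "\<xi>c t = (1/2) *\<^sub>R ((mat 1 + mexp t B) *v \<xi>0)"

lemma B_skew: "(B *v z) \<bullet> z = 0"
  unfolding B_def J0_def
  by (simp add: scaleR_matrix_vector_assoc[symmetric] J_self[OF bil skew])

lemma J0_skew: "(J0 *v z) \<bullet> z = 0"
  unfolding J0_def by (simp add: J_self[OF bil skew])

lemma vc_deriv: "(vc has_vector_derivative B *v vc t) (at t)"
  unfolding vc_def using vmul_deriv[OF mexp_deriv[of B t], of \<xi>0]
  by (simp add: matrix_vector_mul_assoc)

lemma xc_deriv: "(xc has_vector_derivative (1/c) *\<^sub>R vc t) (at t)"
  unfolding xc_def vc_def
  by (intro vd_scale vmul_deriv mphi_deriv)

lemma init: "vc 0 = \<xi>0" "xc 0 = 0" "uc 0 = 0" "\<xi>c 0 = \<xi>0"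
  by (auto simp: vc_def xc_def uc_def \<xi>c_def mexp_0 mphi_0 oint_0 matrix_vector_mult_add_rdistrib
      scaleR_2[symmetric] scaleR_matrix_vector_assoc[symmetric] simp del: scaleR_2)

lemma vc_norm: "norm (vc t) = norm \<xi>0"
proof -
  have "((\<lambda>t. vc t \<bullet> vc t) has_vector_derivative 0) (at s)" for s
  proof -
    have "((\<lambda>t. vc t \<bullet> vc t) has_derivative (\<lambda>h. vc s \<bullet> (h *\<^sub>R (B *v vc s)) + (h *\<^sub>R (B *v vc s)) \<bullet> vc s)) (at s)"
      using vc_deriv[of s] unfolding has_vector_derivative_def
      by (intro derivative_eq_intros) auto
    moreover have "(\<lambda>h. vc s \<bullet> (h *\<^sub>R (B *v vc s)) + (h *\<^sub>R (B *v vc s)) \<bullet> vc s) = (\<lambda>h. h *\<^sub>R 0)"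
      using B_skew[of "vc s"] by (auto simp: inner_commute[of "vc s"])
    ultimately show ?thesis unfolding has_vector_derivative_def by simp
  qed
  from deriv_zero_const[OF this] have "vc t \<bullet> vc t = \<xi>0 \<bullet> \<xi>0" using init by simp
  then show ?thesis by (simp add: norm_eq_sqrt_inner)
qed

lemma key: "\<xi>c t + (1/2) *\<^sub>R (J0 *v xc t) = vc t"
proof -
  have "J0 *v xc t = B *v (mphi t B *v \<xi>0)"
    unfolding xc_def B_def by (simp add: matrix_vector_mult_scaleR scaleR_matrix_vector_assoc[symmetric])
  also have "\<dots> = (mexp t B - mat 1) *v \<xi>0"
    by (simp add: matrix_vector_mul_assoc mphi_mult)
  finally have h: "J0 *v xc t = mexp t B *v \<xi>0 - \<xi>0"
    by (simp add: matrix_vector_mult_diff_rdistrib)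
  have "\<xi>c t + (1/2) *\<^sub>R (J0 *v xc t) = (1/2 + 1/2) *\<^sub>R (mexp t B *v \<xi>0)"
    unfolding \<xi>c_def h
    by (simp add: matrix_vector_mult_add_rdistrib algebra_simps)
  then show ?thesis unfolding vc_def by simp
qed

lemma \<xi>c_deriv: "(\<xi>c has_vector_derivative (1/2) *\<^sub>R (J0 *v ((1/c) *\<^sub>R vc t))) (at t)"
proof -
  have "((\<lambda>s. mexp s B *v \<xi>0) has_vector_derivative B *v vc t) (at t)"
    using vc_deriv unfolding vc_def .
  then have "((\<lambda>s. (1/2) *\<^sub>R (\<xi>0 + mexp s B *v \<xi>0)) has_vector_derivative (1/2) *\<^sub>R (0 + B *v vc t)) (at t)"
    by (intro vd_scale has_vector_derivative_add has_vector_derivative_const)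
  moreover have "B *v vc t = J0 *v ((1/c) *\<^sub>R vc t)"
    unfolding B_def by (simp add: matrix_vector_mult_scaleR scaleR_matrix_vector_assoc[symmetric])
  ultimately show ?thesis
    unfolding \<xi>c_def by (simp add: matrix_vector_mult_add_rdistrib)
qed

lemma integrand_cont: "continuous_on UNIV (\<lambda>\<tau>. br (xc \<tau>) ((1/c) *\<^sub>R vc \<tau>))"
proof -
  have bb: "bounded_bilinear br" using bil by (simp add: bilinear_conv_bounded_bilinear)
  have "continuous_on UNIV xc"
    by (intro continuous_at_imp_continuous_on ballI has_vector_derivative_continuous[OF xc_deriv])
  moreover have "continuous_on UNIV vc"
    by (intro continuous_at_imp_continuous_on ballI has_vector_derivative_continuous[OF vc_deriv])
  ultimately show ?thesis
    by (intro bounded_bilinear.continuous_on[OF bb] continuous_intros)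
qed

lemma uc_deriv: "(uc has_vector_derivative (1/2) *\<^sub>R br (xc t) ((1/c) *\<^sub>R vc t)) (at t)"
  unfolding uc_def
  by (intro vd_scale oint_deriv[OF integrand_cont])

end


context core begin

lemma exist:
  assumes gd: "\<And>t. (g has_derivative (\<lambda>h. ((1/c) *\<^sub>R vc t) \<bullet> h)) (at (vc t))"
  shows "hamiltonian_solution (\<lambda>X \<Xi>. g (fst \<Xi> + (1/2) *\<^sub>R (Jmat br (snd \<Xi>) *v fst X)))
           (\<lambda>t. (xc t, uc t)) (\<lambda>t. (\<xi>c t, \<mu>0)) (0,0) (\<xi>0,\<mu>0)"
  unfolding hamiltonian_solution_def
proof (intro conjI allI)
  show "(xc 0, uc 0) = (0, 0)" "(\<xi>c 0, \<mu>0) = (\<xi>0, \<mu>0)" using init by auto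
  fix t
  have gd': "(g has_derivative (\<lambda>h. ((1/c) *\<^sub>R vc t) \<bullet> h)) (at (\<xi>c t + (1/2) *\<^sub>R (Jmat br \<mu>0 *v xc t)))"
    using gd[of t] key[of t] by (simp add: J0_def)
  show "\<exists>X' \<Xi>'. ((\<lambda>t. (xc t, uc t)) has_vector_derivative X') (at t) \<and>
          ((\<lambda>t. (\<xi>c t, \<mu>0)) has_vector_derivative \<Xi>') (at t) \<and>
          has_gradient (\<lambda>\<eta>. g (fst \<eta> + (1/2) *\<^sub>R (Jmat br (snd \<eta>) *v fst (xc t, uc t)))) X' (\<xi>c t, \<mu>0) \<and>
          has_gradient (\<lambda>y. g (fst (\<xi>c t, \<mu>0) + (1/2) *\<^sub>R (Jmat br (snd (\<xi>c t, \<mu>0)) *v fst y))) (- \<Xi>') (xc t, uc t)"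
  proof (intro exI conjI)
    show "((\<lambda>t. (xc t, uc t)) has_vector_derivative ((1/c) *\<^sub>R vc t, (1/2) *\<^sub>R br (xc t) ((1/c) *\<^sub>R vc t))) (at t)"
      by (intro has_vector_derivative_Pair xc_deriv uc_deriv)
    show "((\<lambda>t. (\<xi>c t, \<mu>0)) has_vector_derivative ((1/2) *\<^sub>R (J0 *v ((1/c) *\<^sub>R vc t)), 0)) (at t)"
      by (intro has_vector_derivative_Pair \<xi>c_deriv has_vector_derivative_const)
    show "has_gradient (\<lambda>\<eta>. g (fst \<eta> + (1/2) *\<^sub>R (Jmat br (snd \<eta>) *v fst (xc t, uc t))))
            ((1/c) *\<^sub>R vc t, (1/2) *\<^sub>R br (xc t) ((1/c) *\<^sub>R vc t)) (\<xi>c t, \<mu>0)"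
      using grad_xi[OF bil gd'] by simp
    show "has_gradient (\<lambda>y. g (fst (\<xi>c t, \<mu>0) + (1/2) *\<^sub>R (Jmat br (snd (\<xi>c t, \<mu>0)) *v fst y)))
            (- ((1/2) *\<^sub>R (J0 *v ((1/c) *\<^sub>R vc t)), 0)) (xc t, uc t)"
      using grad_x[OF bil skew gd', of "uc t"] by (simp add: J0_def)
  qed
qed

lemma uniq:
  fixes x \<xi> w :: "real \<Rightarrow> real^'n" and u :: "real \<Rightarrow> real^'m"
  assumes dx: "\<And>t. (x has_vector_derivative w t) (at t)"
    and du: "\<And>t. (u has_vector_derivative (1/2) *\<^sub>R br (x t) (w t)) (at t)"
    and d\<xi>: "\<And>t. (\<xi> has_vector_derivative (1/2) *\<^sub>R (J0 *v w t)) (at t)"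
    and w: "\<And>t. w t = (1/c) *\<^sub>R (\<xi> t + (1/2) *\<^sub>R (J0 *v x t))"
    and i: "x 0 = 0" "u 0 = 0" "\<xi> 0 = \<xi>0"
  shows "x t = xc t \<and> u t = uc t \<and> \<xi> t = \<xi>c t"
proof -
  define v where "v t = \<xi> t + (1/2) *\<^sub>R (J0 *v x t)" for t
  have lin: "bounded_linear (\<lambda>z. J0 *v z)" by simp
  have dv: "(v has_vector_derivative B *v v t) (at t)" for t
  proof -
    have "((\<lambda>s. J0 *v x s) has_vector_derivative J0 *v w t) (at t)"
      using bounded_linear.has_derivative[OF lin dx[of t, unfolded has_vector_derivative_def]]
      unfolding has_vector_derivative_def by (simp add: matrix_vector_mult_scaleR)
    then have "(v has_vector_derivative (1/2) *\<^sub>R (J0 *v w t) + (1/2) *\<^sub>R (J0 *v w t)) (at t)"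
      unfolding v_def by (intro has_vector_derivative_add d\<xi> vd_scale)
    moreover have "(1/2) *\<^sub>R (J0 *v w t) + (1/2) *\<^sub>R (J0 *v w t) = B *v v t"
      unfolding w v_def B_def
      by (simp add: matrix_vector_mult_scaleR scaleR_matrix_vector_assoc[symmetric] scaleR_2[symmetric] del: scaleR_2)
    ultimately show ?thesis by simp
  qed
  have dd: "((\<lambda>t. v t - vc t) has_vector_derivative B *v (v t - vc t)) (at t)" for t
    using has_vector_derivative_diff[OF dv vc_deriv] by (simp add: matrix_vector_right_distrib algebra_simps)
  have vv: "v t = vc t" for t
    using skew_ode_zero[OF dd B_skew, of t] i init by (simp add: v_def)
  have wv: "w t = (1/c) *\<^sub>R vc t" for t using vv[of t] by (simp add: w v_def)
  have xx: "x t = xc t" for t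
  proof -
    have "((\<lambda>t. x t - xc t) has_vector_derivative 0) (at s)" for s
      using has_vector_derivative_diff[OF dx xc_deriv, of s] by (simp add: wv)
    from deriv_zero_const[OF this] show ?thesis using i init by simp
  qed
  have uu: "u t = uc t" for t
  proof -
    have "((\<lambda>t. u t - uc t) has_vector_derivative 0) (at s)" for s
      using has_vector_derivative_diff[OF du uc_deriv, of s] by (simp add: wv xx)
    from deriv_zero_const[OF this] show ?thesis using i init by simp
  qed
  have "\<xi> t = \<xi>c t"
    using vv[of t] key[of t] xx[of t] unfolding v_def by (metis add_right_cancel)
  then show ?thesis using xx uu by simp
qed

end


lemma vd_fst: "(X has_vector_derivative D) (at t) \<Longrightarrow> ((\<lambda>s. fst (X s)) has_vector_derivative fst D) (at t)"
  unfolding has_vector_derivative_def by (drule has_derivative_fst) simp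

lemma vd_snd: "(X has_vector_derivative D) (at t) \<Longrightarrow> ((\<lambda>s. snd (X s)) has_vector_derivative snd D) (at t)"
  unfolding has_vector_derivative_def by (drule has_derivative_snd) simp

lemma ham_ode:
  fixes br :: "real^'n \<Rightarrow> real^'n \<Rightarrow> real^'m" and g :: "real^'n \<Rightarrow> real"
    and X \<Xi> :: "real \<Rightarrow> (real^'n) \<times> (real^'m)"
  assumes bil: "bilinear br" and skew: "\<And>x y. br x y = - br y x"
    and hs: "hamiltonian_solution (\<lambda>X \<Xi>. g (fst \<Xi> + (1/2) *\<^sub>R (Jmat br (snd \<Xi>) *v fst X))) X \<Xi> X0 \<Xi>0"
    and gd: "(g has_derivative (\<lambda>h. W \<bullet> h)) (at (fst (\<Xi> t) + (1/2) *\<^sub>R (Jmat br (snd (\<Xi> t)) *v fst (X t))))"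
  shows "(X has_vector_derivative (W, (1/2) *\<^sub>R br (fst (X t)) W)) (at t) \<and>
         (\<Xi> has_vector_derivative ((1/2) *\<^sub>R (Jmat br (snd (\<Xi> t)) *v W), 0)) (at t)"
proof -
  from hs obtain X' \<Xi>' where d: "(X has_vector_derivative X') (at t)" "(\<Xi> has_vector_derivative \<Xi>') (at t)"
    and g1: "has_gradient (\<lambda>\<eta>. g (fst \<eta> + (1/2) *\<^sub>R (Jmat br (snd \<eta>) *v fst (X t)))) X' (\<Xi> t)"
    and g2: "has_gradient (\<lambda>y. g (fst (\<Xi> t) + (1/2) *\<^sub>R (Jmat br (snd (\<Xi> t)) *v fst y))) (- \<Xi>') (X t)"
    unfolding hamiltonian_solution_def by blast
  have "has_gradient (\<lambda>\<eta>. g (fst \<eta> + (1/2) *\<^sub>R (Jmat br (snd \<eta>) *v fst (X t))))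
          (W, (1/2) *\<^sub>R br (fst (X t)) W) (fst (\<Xi> t), snd (\<Xi> t))"
    by (rule grad_xi[OF bil gd])
  then have e1: "X' = (W, (1/2) *\<^sub>R br (fst (X t)) W)" using grad_unique[OF g1] by simp
  have "has_gradient (\<lambda>y. g (fst (\<Xi> t) + (1/2) *\<^sub>R (Jmat br (snd (\<Xi> t)) *v fst y)))
          (- ((1/2) *\<^sub>R (Jmat br (snd (\<Xi> t)) *v W)), 0) (fst (X t), snd (X t))"
    by (rule grad_x[OF bil skew gd])
  then have "- \<Xi>' = (- ((1/2) *\<^sub>R (Jmat br (snd (\<Xi> t)) *v W)), 0)" using grad_unique[OF g2] by simp
  then have e2: "\<Xi>' = ((1/2) *\<^sub>R (Jmat br (snd (\<Xi> t)) *v W), 0)"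
  proof -
    from \<open>- \<Xi>' = _\<close> have "\<Xi>' = - (- ((1/2) *\<^sub>R (Jmat br (snd (\<Xi> t)) *v W)), 0::real^'m)"
      by (metis minus_minus)
    then show ?thesis by simp
  qed
  show ?thesis using d e1 e2 by simp
qed

lemma norm_nondiff:
  fixes br :: "real^'n \<Rightarrow> real^'n \<Rightarrow> real^'m"
  assumes z: "\<xi> + (1/2) *\<^sub>R (Jmat br \<mu> *v x) = 0"
  shows "\<not> has_gradient (\<lambda>\<eta>. norm (fst \<eta> + (1/2) *\<^sub>R (Jmat br (snd \<eta>) *v x))) G (\<xi>, \<mu>)"
proof
  assume hg: "has_gradient (\<lambda>\<eta>. norm (fst \<eta> + (1/2) *\<^sub>R (Jmat br (snd \<eta>) *v x))) G (\<xi>, \<mu>)"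
  define e :: "real^'n" where "e = axis undefined 1"
  have dp: "((\<lambda>s::real. (\<xi> + s *\<^sub>R e, \<mu>)) has_derivative (\<lambda>h. (h *\<^sub>R e, 0))) (at 0)"
    by (auto intro!: derivative_eq_intros)
  have "((\<lambda>s. norm (fst (\<xi> + s *\<^sub>R e, \<mu>) + (1/2) *\<^sub>R (Jmat br (snd (\<xi> + s *\<^sub>R e, \<mu>)) *v x)))
         has_derivative (\<lambda>h. G \<bullet> (h *\<^sub>R e, 0))) (at 0)"
    by (rule has_derivative_compose[OF dp]) (use hg in \<open>simp add: has_gradient_def\<close>)
  moreover have "(\<lambda>s. norm (fst (\<xi> + s *\<^sub>R e, \<mu>) + (1/2) *\<^sub>R (Jmat br (snd (\<xi> + s *\<^sub>R e, \<mu>)) *v x)))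
      = (\<lambda>s. \<bar>s\<bar>)"
  proof
    fix s :: real
    have eq: "\<xi> + s *\<^sub>R e + (1/2) *\<^sub>R (Jmat br \<mu> *v x) = s *\<^sub>R e"
      using z by (metis add.commute add.left_commute add_0)
    have ne: "norm e = 1" by (simp add: e_def)
    show "norm (fst (\<xi> + s *\<^sub>R e, \<mu>) + (1/2) *\<^sub>R (Jmat br (snd (\<xi> + s *\<^sub>R e, \<mu>)) *v x)) = \<bar>s\<bar>"
      unfolding fst_conv snd_conv eq using ne by simp
  qed
  moreover have "(\<lambda>h. G \<bullet> (h *\<^sub>R e, 0)) = (*) (G \<bullet> (e, 0))"
    by (auto simp: fun_eq_iff inner_prod_def mult.commute)
  ultimately have "((\<lambda>s::real. \<bar>s\<bar>) has_field_derivative (G \<bullet> (e, 0))) (at 0)"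
    unfolding has_field_derivative_def by simp
  then show False using abs_not_deriv by blast
qed


context core begin

lemma ode_from_ham:
  fixes X \<Xi> :: "real \<Rightarrow> (real^'n) \<times> (real^'m)" and g :: "real^'n \<Rightarrow> real"
  assumes hs: "hamiltonian_solution (\<lambda>X \<Xi>. g (fst \<Xi> + (1/2) *\<^sub>R (Jmat br (snd \<Xi>) *v fst X))) X \<Xi> (0,0) (\<xi>0,\<mu>0)"
    and gd: "\<And>t. (g has_derivative (\<lambda>h. W t \<bullet> h)) (at (fst (\<Xi> t) + (1/2) *\<^sub>R (Jmat br (snd (\<Xi> t)) *v fst (X t))))"
  shows "snd (\<Xi> t) = \<mu>0"
    and "((\<lambda>t. fst (X t)) has_vector_derivative W t) (at t)"
    and "((\<lambda>t. snd (X t)) has_vector_derivative (1/2) *\<^sub>R br (fst (X t)) (W t)) (at t)"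
    and "((\<lambda>t. fst (\<Xi> t)) has_vector_derivative (1/2) *\<^sub>R (J0 *v W t)) (at t)"
    and "fst (X 0) = 0" "snd (X 0) = 0" "fst (\<Xi> 0) = \<xi>0"
proof -
  have ode: "(X has_vector_derivative (W s, (1/2) *\<^sub>R br (fst (X s)) (W s))) (at s) \<and>
         (\<Xi> has_vector_derivative ((1/2) *\<^sub>R (Jmat br (snd (\<Xi> s)) *v W s), 0)) (at s)" for s
    by (rule ham_ode[OF bil skew hs gd])
  have i: "X 0 = (0,0)" "\<Xi> 0 = (\<xi>0, \<mu>0)" using hs unfolding hamiltonian_solution_def by auto
  have "((\<lambda>t. snd (\<Xi> t)) has_vector_derivative 0) (at s)" for s
    using vd_snd[of \<Xi> _ s] ode[of s] by auto
  from deriv_zero_const[OF this] show mu: "snd (\<Xi> t) = \<mu>0" for t using i by simp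
  show "((\<lambda>t. fst (X t)) has_vector_derivative W t) (at t)"
    using vd_fst[of X _ t] ode[of t] by auto
  show "((\<lambda>t. snd (X t)) has_vector_derivative (1/2) *\<^sub>R br (fst (X t)) (W t)) (at t)"
    using vd_snd[of X _ t] ode[of t] by auto
  show "((\<lambda>t. fst (\<Xi> t)) has_vector_derivative (1/2) *\<^sub>R (J0 *v W t)) (at t)"
    using vd_fst[of \<Xi> _ t] ode[of t] mu[of t] by (auto simp: J0_def)
  show "fst (X 0) = 0" "snd (X 0) = 0" "fst (\<Xi> 0) = \<xi>0" using i by auto
qed

lemma uniq_ham:
  fixes X \<Xi> :: "real \<Rightarrow> (real^'n) \<times> (real^'m)" and g :: "real^'n \<Rightarrow> real"
  assumes hs: "hamiltonian_solution (\<lambda>X \<Xi>. g (fst \<Xi> + (1/2) *\<^sub>R (Jmat br (snd \<Xi>) *v fst X))) X \<Xi> (0,0) (\<xi>0,\<mu>0)"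
    and gd: "\<And>t. (g has_derivative (\<lambda>h. ((1/c) *\<^sub>R (fst (\<Xi> t) + (1/2) *\<^sub>R (Jmat br (snd (\<Xi> t)) *v fst (X t)))) \<bullet> h))
                 (at (fst (\<Xi> t) + (1/2) *\<^sub>R (Jmat br (snd (\<Xi> t)) *v fst (X t))))"
  shows "X = (\<lambda>t. (xc t, uc t)) \<and> \<Xi> = (\<lambda>t. (\<xi>c t, \<mu>0))"
proof -
  define W where "W t = (1/c) *\<^sub>R (fst (\<Xi> t) + (1/2) *\<^sub>R (Jmat br (snd (\<Xi> t)) *v fst (X t)))" for t
  note o = ode_from_ham[OF hs, of W, unfolded W_def, OF gd]
  have W: "W t = (1/c) *\<^sub>R (fst (\<Xi> t) + (1/2) *\<^sub>R (J0 *v fst (X t)))" for t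
    using o(1)[of t] by (simp add: W_def J0_def)
  have r: "fst (X t) = xc t \<and> snd (X t) = uc t \<and> fst (\<Xi> t) = \<xi>c t" for t
    by (rule uniq[of "\<lambda>t. fst (X t)" W "\<lambda>t. snd (X t)" "\<lambda>t. fst (\<Xi> t)", OF _ _ _ W])
       (use o[folded W_def] in auto)
  show ?thesis
  proof
    show "X = (\<lambda>t. (xc t, uc t))" using r by (auto simp: fun_eq_iff prod_eq_iff)
    show "\<Xi> = (\<lambda>t. (\<xi>c t, \<mu>0))" using r o(1) by (auto simp: fun_eq_iff prod_eq_iff)
  qed
qed

end


theorem proposition5p1:
  fixes br :: "real^'n \<Rightarrow> real^'n \<Rightarrow> real^'m"
    and \<xi>0 :: "real^'n" and \<mu>0 :: "real^'m"
  assumes bil: "bilinear br"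
    and skew: "\<And>x y. br x y = - br y x"
    and strat: "span {br x y | x y. True} = UNIV"
  defines "J \<equiv> Jmat br"
  defines "Xa \<equiv> (\<lambda>t. (mphi t (J \<mu>0) *v \<xi>0,
              (1/2) *\<^sub>R oint t (\<lambda>\<tau>. br (mphi \<tau> (J \<mu>0) *v \<xi>0) (mexp \<tau> (J \<mu>0) *v \<xi>0))))"
    and "\<Xi>a \<equiv> (\<lambda>t. (((1/2) *\<^sub>R (mat 1 + mexp t (J \<mu>0))) *v \<xi>0, \<mu>0))"
    and "Xb \<equiv> (\<lambda>t. (mphi (t / norm \<xi>0) (J \<mu>0) *v \<xi>0,
              (1/2) *\<^sub>R oint t (\<lambda>\<tau>. br (mphi (\<tau> / norm \<xi>0) (J \<mu>0) *v \<xi>0)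
                   (mexp \<tau> (J ((1 / norm \<xi>0) *\<^sub>R \<mu>0)) *v ((1 / norm \<xi>0) *\<^sub>R \<xi>0)))))"
    and "\<Xi>b \<equiv> (\<lambda>t. (((1/2) *\<^sub>R (mat 1 + mexp t (J ((1 / norm \<xi>0) *\<^sub>R \<mu>0)))) *v \<xi>0, \<mu>0))"
  shows "(hamiltonian_solution (\<lambda>X \<Xi>. (Hsub br X \<Xi>)\<^sup>2 / 2) Xa \<Xi>a (0, 0) (\<xi>0, \<mu>0) \<and>
          (\<forall>X \<Xi>. hamiltonian_solution (\<lambda>X \<Xi>. (Hsub br X \<Xi>)\<^sup>2 / 2) X \<Xi> (0, 0) (\<xi>0, \<mu>0)
                 \<longrightarrow> X = Xa \<and> \<Xi> = \<Xi>a))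
       \<and> (\<xi>0 \<noteq> 0 \<longrightarrow>
          hamiltonian_solution (Hsub br) Xb \<Xi>b (0, 0) (\<xi>0, \<mu>0) \<and>
          (\<forall>X \<Xi>. hamiltonian_solution (Hsub br) X \<Xi> (0, 0) (\<xi>0, \<mu>0)
                 \<longrightarrow> X = Xb \<and> \<Xi> = \<Xi>b))"
proof -
  note Jd = J_def
  interpret c1: core br \<mu>0 \<xi>0 1 by unfold_locales (rule bil, rule skew, simp)
  have Xa_eq: "Xa = (\<lambda>t. (c1.xc t, c1.uc t))"
    unfolding Xa_def J_def c1.xc_def c1.uc_def c1.vc_def c1.B_def c1.J0_def by simp
  have Xia_eq: "\<Xi>a = (\<lambda>t. (c1.\<xi>c t, \<mu>0))"
    unfolding \<Xi>a_def J_def c1.\<xi>c_def c1.B_def c1.J0_def by (simp add: scaleR_matrix_vector_assoc)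
  have Ham1: "(\<lambda>X \<Xi>. (Hsub br X \<Xi>)\<^sup>2 / 2) =
      (\<lambda>X \<Xi>. (\<lambda>z. (norm z)\<^sup>2 / 2) (fst \<Xi> + (1/2) *\<^sub>R (Jmat br (snd \<Xi>) *v fst X)))"
    by (simp add: Hsub_def)
  have part1: "hamiltonian_solution (\<lambda>X \<Xi>. (Hsub br X \<Xi>)\<^sup>2 / 2) Xa \<Xi>a (0, 0) (\<xi>0, \<mu>0) \<and>
          (\<forall>X \<Xi>. hamiltonian_solution (\<lambda>X \<Xi>. (Hsub br X \<Xi>)\<^sup>2 / 2) X \<Xi> (0, 0) (\<xi>0, \<mu>0)
                 \<longrightarrow> X = Xa \<and> \<Xi> = \<Xi>a)"
  proof (intro conjI allI impI)
    show "hamiltonian_solution (\<lambda>X \<Xi>. (Hsub br X \<Xi>)\<^sup>2 / 2) Xa \<Xi>a (0, 0) (\<xi>0, \<mu>0)"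
      unfolding Xa_eq Xia_eq Ham1 by (rule c1.exist) (use deriv_sq2 in simp)
    fix X \<Xi>
    assume "hamiltonian_solution (\<lambda>X \<Xi>. (Hsub br X \<Xi>)\<^sup>2 / 2) X \<Xi> (0, 0) (\<xi>0, \<mu>0)"
    then have "X = (\<lambda>t. (c1.xc t, c1.uc t)) \<and> \<Xi> = (\<lambda>t. (c1.\<xi>c t, \<mu>0))"
      unfolding Ham1 by (rule c1.uniq_ham) (use deriv_sq2 in simp)
    then show "X = Xa" "\<Xi> = \<Xi>a" unfolding Xa_eq Xia_eq by auto
  qed
  have part2: "\<xi>0 \<noteq> 0 \<longrightarrow>
          hamiltonian_solution (Hsub br) Xb \<Xi>b (0, 0) (\<xi>0, \<mu>0) \<and>
          (\<forall>X \<Xi>. hamiltonian_solution (Hsub br) X \<Xi> (0, 0) (\<xi>0, \<mu>0)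
                 \<longrightarrow> X = Xb \<and> \<Xi> = \<Xi>b)"
  proof (intro impI conjI allI)
    assume nz: "\<xi>0 \<noteq> 0"
    define c where "c = norm \<xi>0"
    have cpos: "c > 0" using nz by (simp add: c_def)
    interpret c2: core br \<mu>0 \<xi>0 c by unfold_locales (rule bil, rule skew, rule cpos)
    have mphi_c: "mphi (t / c) (Jmat br \<mu>0) = (1/c) *\<^sub>R mphi t c2.B" for t
      using mphi_scale[of t "1/c" "Jmat br \<mu>0"] by (simp add: c2.B_def c2.J0_def)
    have B_eq: "Jmat br ((1 / c) *\<^sub>R \<mu>0) = c2.B" by (simp add: c2.B_def c2.J0_def J_scale)
    have Xb_eq: "Xb = (\<lambda>t. (c2.xc t, c2.uc t))"
      unfolding Xb_def J_def c_def[symmetric] mphi_c B_eq c2.xc_def c2.uc_def c2.vc_def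
      by (simp add: scaleR_matrix_vector_assoc matrix_vector_mult_scaleR)
    have Xib_eq: "\<Xi>b = (\<lambda>t. (c2.\<xi>c t, \<mu>0))"
      unfolding \<Xi>b_def J_def c_def[symmetric] B_eq c2.\<xi>c_def by (simp add: scaleR_matrix_vector_assoc)
    have Ham2: "Hsub br = (\<lambda>X \<Xi>. norm (fst \<Xi> + (1/2) *\<^sub>R (Jmat br (snd \<Xi>) *v fst X)))"
      by (simp add: Hsub_def fun_eq_iff)
    show "hamiltonian_solution (Hsub br) Xb \<Xi>b (0, 0) (\<xi>0, \<mu>0)"
      unfolding Xb_eq Xib_eq Ham2
    proof (rule c2.exist)
      fix t
      have "c2.vc t \<noteq> 0" using c2.vc_norm[of t] nz by auto
      from deriv_norm[OF this] show "(norm has_derivative (\<lambda>h. ((1/c) *\<^sub>R c2.vc t) \<bullet> h)) (at (c2.vc t))"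
        using c2.vc_norm[of t] by (simp add: c_def divide_inverse_commute)
    qed
    fix X \<Xi>
    assume hs0: "hamiltonian_solution (Hsub br) X \<Xi> (0, 0) (\<xi>0, \<mu>0)"
    then have hs: "hamiltonian_solution (\<lambda>X \<Xi>. norm (fst \<Xi> + (1/2) *\<^sub>R (Jmat br (snd \<Xi>) *v fst X))) X \<Xi> (0, 0) (\<xi>0, \<mu>0)"
      unfolding Ham2 .
    define v where "v t = fst (\<Xi> t) + (1/2) *\<^sub>R (Jmat br (snd (\<Xi> t)) *v fst (X t))" for t
    have vnz: "v t \<noteq> 0" for t
    proof
      assume v0: "v t = 0"
      from hs obtain X' \<Xi>' where
        "has_gradient (\<lambda>\<eta>. norm (fst \<eta> + (1/2) *\<^sub>R (Jmat br (snd \<eta>) *v fst (X t)))) X' (\<Xi> t)"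
        unfolding hamiltonian_solution_def by blast
      then have "has_gradient (\<lambda>\<eta>. norm (fst \<eta> + (1/2) *\<^sub>R (Jmat br (snd \<eta>) *v fst (X t)))) X' (fst (\<Xi> t), snd (\<Xi> t))"
        by simp
      with norm_nondiff[of "fst (\<Xi> t)" br "snd (\<Xi> t)" "fst (X t)" X'] v0 show False
        by (simp add: v_def)
    qed
    define W where "W t = v t /\<^sub>R norm (v t)" for t
    have gdW: "(norm has_derivative (\<lambda>h. W t \<bullet> h)) (at (fst (\<Xi> t) + (1/2) *\<^sub>R (Jmat br (snd (\<Xi> t)) *v fst (X t))))" for t
      using deriv_norm[OF vnz[of t]] by (simp only: W_def v_def)
    note o = c2.ode_from_ham[OF hs gdW]
    have v_eq: "v t = fst (\<Xi> t) + (1/2) *\<^sub>R (c2.J0 *v fst (X t))" for t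
      using o(1)[of t] by (simp add: v_def c2.J0_def)
    have lin: "bounded_linear (\<lambda>z. c2.J0 *v z)" by simp
    have dv: "(v has_vector_derivative c2.J0 *v W t) (at t)" for t
    proof -
      have "((\<lambda>s. c2.J0 *v fst (X s)) has_vector_derivative c2.J0 *v W t) (at t)"
        using bounded_linear.has_derivative[OF lin o(2)[of t, unfolded has_vector_derivative_def]]
        unfolding has_vector_derivative_def by (simp add: matrix_vector_mult_scaleR)
      then have "((\<lambda>t. fst (\<Xi> t) + (1/2) *\<^sub>R (c2.J0 *v fst (X t))) has_vector_derivative
                   (1/2) *\<^sub>R (c2.J0 *v W t) + (1/2) *\<^sub>R (c2.J0 *v W t)) (at t)"
        by (intro has_vector_derivative_add o(4) vd_scale)
      moreover have "(1/2) *\<^sub>R (c2.J0 *v W t) + (1/2) *\<^sub>R (c2.J0 *v W t) = c2.J0 *v W t"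
        by (simp add: scaleR_2[symmetric] del: scaleR_2)
      moreover have "v = (\<lambda>t. fst (\<Xi> t) + (1/2) *\<^sub>R (c2.J0 *v fst (X t)))"
        using v_eq by auto
      ultimately show ?thesis by simp
    qed
    have "((\<lambda>t. v t \<bullet> v t) has_vector_derivative 0) (at s)" for s
    proof -
      have "((\<lambda>t. v t \<bullet> v t) has_derivative (\<lambda>h. v s \<bullet> (h *\<^sub>R (c2.J0 *v W s)) + (h *\<^sub>R (c2.J0 *v W s)) \<bullet> v s)) (at s)"
        using dv[of s] unfolding has_vector_derivative_def
        by (intro derivative_eq_intros) auto
      moreover have "(\<lambda>h. v s \<bullet> (h *\<^sub>R (c2.J0 *v W s)) + (h *\<^sub>R (c2.J0 *v W s)) \<bullet> v s) = (\<lambda>h. h *\<^sub>R 0)"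
        using c2.J0_skew[of "v s"]
        by (auto simp: inner_commute[of "v s"] W_def matrix_vector_mult_scaleR)
      ultimately show ?thesis unfolding has_vector_derivative_def by simp
    qed
    from deriv_zero_const[OF this] have "v t \<bullet> v t = v 0 \<bullet> v 0" for t .
    moreover have "v 0 = \<xi>0" using o(5,7) v_eq[of 0] by simp
    ultimately have nv: "norm (v t) = c" for t
      by (simp add: c_def norm_eq_sqrt_inner)
    have gd: "(norm has_derivative (\<lambda>h. ((1/c) *\<^sub>R (fst (\<Xi> t) + (1/2) *\<^sub>R (Jmat br (snd (\<Xi> t)) *v fst (X t)))) \<bullet> h))
                 (at (fst (\<Xi> t) + (1/2) *\<^sub>R (Jmat br (snd (\<Xi> t)) *v fst (X t))))" for t
    proof -
      have "W t = (1/c) *\<^sub>R v t" using nv[of t] by (simp add: W_def inverse_eq_divide)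
      then show ?thesis using gdW[of t] by (simp only: v_def)
    qed
    have "X = (\<lambda>t. (c2.xc t, c2.uc t)) \<and> \<Xi> = (\<lambda>t. (c2.\<xi>c t, \<mu>0))"
      by (rule c2.uniq_ham[OF hs gd])
    then show "X = Xb" "\<Xi> = \<Xi>b" unfolding Xb_eq Xib_eq by auto
  qed
  show ?thesis using part1 part2 by blast
qed

end
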